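(* Let $(X,d)$ be a nonempty compact metric space and let $F:X\rightarrow K(X)$ be a set-valued $(\beta_x,r_x)$-local contraction on $X$. Then: (a) if $X$ is $r$-chainable for some $r>0$ such that $F$ is a $(\beta,r)$-uniform local contraction for some $\beta\in[0,1)$, then $\mathrm{Fix}(F)\neq\varnothing$; (b) if $X$ is the union of finitely many pairwise disjoint connected components and $F(x)$ is connected for every $x\in X$, then there is a positive integer $m$ such that $\mathrm{Fix}(F^{(m)})\neq\varnothing$.
   Context: $K(X)$ is the set of nonempty compact subsets of $X$; $H$ is the Hausdorff distance $H(A,B)=\max\{\sup_{a\in A}d(a,B),\sup_{b\in B}d(b,A)\}$ with $d(y,A)=\inf_{a\in A}d(a,y)$; $B_r(x)=\{z\in X:d(x,z)\le r\}$. $F$ is a set-valued $(\beta_x,r_x)$-local contraction if for every $x\in X$ there exist $r_x>0$ and $\beta_x\in[0,1)$ such that $H(F(y),F(z))\le\beta_x d(y,z)$ for all $y,z\in B_{r_x}(x)$; it is a $(\beta,r)$-uniform local contraction if this holds with $\beta_x=\beta$ and $r_x=r$ independent of $x$. An $r$-chain from $x$ to $y$ is a finite sequence $z_0=x,\ldots,z_n=y$ with $d(z_{i-1},z_i)<r$; $X$ is $r$-chainable if any two points are joined by an $r$-chain. Composition of set-valued maps: $(G\circ F)(x)=\bigcup\{G(y):y\in F(x)\}$, and $F^{(m)}$ is the $m$-fold composition of $F$ with itself. $\mathrm{Fix}(G)=\{x\in X: x\in G(x)\}$. *)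

theory Defs
  imports "HOL-Analysis.Analysis"
begin

definition hausdorff_dist :: "'a::metric_space set \<Rightarrow> 'a set \<Rightarrow> real" where
  "hausdorff_dist A B = max (SUP a\<in>A. infdist a B) (SUP b\<in>B. infdist b A)"

definition ballX :: "'a::metric_space set \<Rightarrow> 'a \<Rightarrow> real \<Rightarrow> 'a set" where
  "ballX X x r = {z \<in> X. dist x z \<le> r}"

definition setvalued_compact :: "'a::metric_space set \<Rightarrow> ('a \<Rightarrow> 'a set) \<Rightarrow> bool" where
  "setvalued_compact X F \<longleftrightarrow> (\<forall>x\<in>X. F x \<noteq> {} \<and> compact (F x) \<and> F x \<subseteq> X)"

definition local_contraction :: "'a::metric_space set \<Rightarrow> ('a \<Rightarrow> 'a set) \<Rightarrow> bool" where
  "local_contraction X F \<longleftrightarrow>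
     (\<forall>x\<in>X. \<exists>r>0. \<exists>\<beta>. 0 \<le> \<beta> \<and> \<beta> < 1 \<and>
        (\<forall>y\<in>ballX X x r. \<forall>z\<in>ballX X x r. hausdorff_dist (F y) (F z) \<le> \<beta> * dist y z))"

definition uniform_local_contraction ::
    "'a::metric_space set \<Rightarrow> ('a \<Rightarrow> 'a set) \<Rightarrow> real \<Rightarrow> real \<Rightarrow> bool" where
  "uniform_local_contraction X F \<beta> r \<longleftrightarrow>
     r > 0 \<and> 0 \<le> \<beta> \<and> \<beta> < 1 \<and>
     (\<forall>x\<in>X. \<forall>y\<in>ballX X x r. \<forall>z\<in>ballX X x r. hausdorff_dist (F y) (F z) \<le> \<beta> * dist y z)"

definition r_chainable :: "'a::metric_space set \<Rightarrow> real \<Rightarrow> bool" where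
  "r_chainable X r \<longleftrightarrow>
     (\<forall>x\<in>X. \<forall>y\<in>X. \<exists>n::nat. \<exists>z::nat \<Rightarrow> 'a. z 0 = x \<and> z n = y \<and>
        (\<forall>i\<le>n. z i \<in> X) \<and> (\<forall>i<n. dist (z i) (z (Suc i)) < r))"

definition sv_comp :: "('a \<Rightarrow> 'a set) \<Rightarrow> ('a \<Rightarrow> 'a set) \<Rightarrow> 'a \<Rightarrow> 'a set" where
  "sv_comp G F x = (\<Union>y\<in>F x. G y)"

text \<open>m-fold composition F^(m) for m \<ge> 1 (sv_iter 0 F = F).\<close>
fun sv_iter :: "nat \<Rightarrow> ('a \<Rightarrow> 'a set) \<Rightarrow> 'a \<Rightarrow> 'a set" where
  "sv_iter 0 F = F"
| "sv_iter (Suc k) F = sv_comp F (sv_iter k F)"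

definition power_sv :: "('a \<Rightarrow> 'a set) \<Rightarrow> nat \<Rightarrow> 'a \<Rightarrow> 'a set" where
  "power_sv F m = sv_iter (m - 1) F"

definition Fix :: "'a set \<Rightarrow> ('a \<Rightarrow> 'a set) \<Rightarrow> 'a set" where
  "Fix X G = {x\<in>X. x \<in> G x}"

end

theory Submission
  imports Defs
begin

lemma infdist_attains_compact:
  fixes A :: "'a::metric_space set"
  assumes "compact A" "A \<noteq> {}"
  shows "\<exists>b\<in>A. infdist a A = dist a b"
proof -
  obtain b where b: "b \<in> A" "\<And>y. y \<in> A \<Longrightarrow> dist a b \<le> dist a y"
  proof -
    have "continuous_on A (dist a)" by (intro continuous_intros)
    then show ?thesis using continuous_attains_inf[OF assms, of "dist a"] that by blast
  qed
  have "infdist a A \<le> dist a b" using b(1) by (rule infdist_le)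
  moreover have "dist a b \<le> infdist a A"
    unfolding infdist_def using assms b by (auto intro: cINF_greatest)
  ultimately show ?thesis using b by force
qed

lemma infdist_le_hd:
  fixes A B :: "'a::metric_space set"
  assumes "compact A" "a \<in> A"
  shows "infdist a B \<le> hausdorff_dist A B"
proof -
  have "compact ((\<lambda>a. infdist a B) ` A)"
    by (rule compact_continuous_image[OF _ assms(1)]) (auto intro: continuous_intros)
  then have "bdd_above ((\<lambda>a. infdist a B) ` A)"
    by (simp add: bounded_imp_bdd_above compact_imp_bounded)
  then have "infdist a B \<le> (SUP a\<in>A. infdist a B)" using assms(2) by (rule cSUP_upper2) simp
  then show ?thesis unfolding hausdorff_dist_def by linarith
qed

lemma hd_sym: "hausdorff_dist A B = hausdorff_dist B A"
  unfolding hausdorff_dist_def by (simp add: max.commute)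

definition chn :: "'a::metric_space set \<Rightarrow> real \<Rightarrow> 'a \<Rightarrow> 'a \<Rightarrow> nat \<Rightarrow> (nat \<Rightarrow> 'a) \<Rightarrow> bool" where
  "chn X r x y n z \<longleftrightarrow> z 0 = x \<and> z n = y \<and> (\<forall>i\<le>n. z i \<in> X) \<and> (\<forall>i<n. dist (z i) (z (Suc i)) < r)"

definition clen :: "nat \<Rightarrow> (nat \<Rightarrow> 'a::metric_space) \<Rightarrow> real" where
  "clen n z = (\<Sum>i<n. dist (z i) (z (Suc i)))"

definition transf :: "'a::metric_space set \<Rightarrow> real \<Rightarrow> ('a \<Rightarrow> 'a set) \<Rightarrow> real \<Rightarrow> bool" where
  "transf X r G \<beta> \<longleftrightarrow> (\<forall>x y n z a. chn X r x y n z \<and> a \<in> G x \<longrightarrow>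
     (\<exists>b m w. b \<in> G y \<and> chn X r a b m w \<and> clen m w \<le> \<beta> * clen n z))"

definition stepc :: "'a::metric_space set \<Rightarrow> ('a \<Rightarrow> 'a set) \<Rightarrow> real \<Rightarrow> real \<Rightarrow> bool" where
  "stepc X F \<beta> r \<longleftrightarrow> (\<forall>y\<in>X. \<forall>z\<in>X. dist y z < r \<longrightarrow> hausdorff_dist (F y) (F z) \<le> \<beta> * dist y z)"

lemma clen_nonneg: "clen n z \<ge> 0"
  unfolding clen_def by (auto intro: sum_nonneg)

lemma clen_ge_dist: "dist (z 0) (z n) \<le> clen n z"
proof (induction n)
  case 0 then show ?case by (simp add: clen_def)
next
  case (Suc n)
  have "dist (z 0) (z (Suc n)) \<le> dist (z 0) (z n) + dist (z n) (z (Suc n))" by (rule dist_triangle)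
  also have "\<dots> \<le> clen (Suc n) z" using Suc by (simp add: clen_def)
  finally show ?case .
qed

lemma chn_X: "chn X r x y n z \<Longrightarrow> x \<in> X \<and> y \<in> X"
  unfolding chn_def by (metis le0 order_refl)

lemma chn_prepend:
  assumes "chn X r x y n z" "p \<in> X" "dist p x < r"
  shows "chn X r p y (Suc n) (\<lambda>i. if i = 0 then p else z (i - 1))
       \<and> clen (Suc n) (\<lambda>i. if i = 0 then p else z (i - 1)) = dist p x + clen n z"
proof
  show "chn X r p y (Suc n) (\<lambda>i. if i = 0 then p else z (i - 1))"
    unfolding chn_def
  proof (intro conjI allI impI)
    fix i assume "i \<le> Suc n" then show "(if i = 0 then p else z (i - 1)) \<in> X"
      using assms unfolding chn_def by (cases i) auto
  next
    fix i assume "i < Suc n" then show "dist (if i = 0 then p else z (i - 1)) (if Suc i = 0 then p else z (Suc i - 1)) < r"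
      using assms unfolding chn_def by (cases i) auto
  qed (use assms in \<open>auto simp: chn_def\<close>)
  show "clen (Suc n) (\<lambda>i. if i = 0 then p else z (i - 1)) = dist p x + clen n z"
    using assms unfolding chn_def clen_def sum.lessThan_Suc_shift by simp
qed

lemma chn_single:
  assumes "x \<in> X" "y \<in> X" "dist x y < r"
  shows "chn X r x y 1 (\<lambda>i. if i = 0 then x else y) \<and> clen 1 (\<lambda>i. if i = 0 then x else y) = dist x y"
  using assms unfolding chn_def clen_def by auto

lemma chn_zero: "x \<in> X \<Longrightarrow> chn X r x x 0 (\<lambda>_. x) \<and> clen 0 (\<lambda>_. x) = 0"
  unfolding chn_def clen_def by auto

lemma near:
  assumes SV: "setvalued_compact X F" and ST: "stepc X F \<beta> r"
    and "y \<in> X" "z \<in> X" "dist y z < r" "a \<in> F y"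
  shows "\<exists>a'\<in>F z. dist a a' \<le> \<beta> * dist y z"
proof -
  have c: "compact (F y)" "compact (F z)" "F z \<noteq> {}" using SV assms(3,4) unfolding setvalued_compact_def by auto
  obtain a' where a': "a' \<in> F z" "infdist a (F z) = dist a a'"
    using infdist_attains_compact[OF c(2,3)] by blast
  have "infdist a (F z) \<le> hausdorff_dist (F y) (F z)" by (rule infdist_le_hd[OF c(1) assms(6)])
  also have "\<dots> \<le> \<beta> * dist y z" using ST assms(3-5) unfolding stepc_def by auto
  finally show ?thesis using a' by auto
qed

lemma transfer_F_aux:
  assumes SV: "setvalued_compact X F" and ST: "stepc X F \<beta> r" and b0: "\<beta> \<ge> 0" "\<beta> \<le> 1"
  shows "chn X r x y n z \<Longrightarrow> a \<in> F x \<Longrightarrow> \<exists>b m w. b \<in> F y \<and> chn X r a b m w \<and> clen m w \<le> \<beta> * clen n z"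
proof (induction n arbitrary: x z a)
  case 0
  then have "x = y" "x \<in> X" unfolding chn_def by auto
  moreover have "a \<in> X" using 0 \<open>x \<in> X\<close> SV unfolding setvalued_compact_def by auto
  ultimately show ?case using 0 chn_zero[of a X r] clen_nonneg[of 0 z] b0
    by (metis mult_nonneg_nonneg)
next
  case (Suc n)
  have xX: "x \<in> X" and z1: "z 1 \<in> X" and d: "dist x (z 1) < r"
    using Suc.prems(1) unfolding chn_def by auto
  obtain a' where a': "a' \<in> F (z 1)" "dist a a' \<le> \<beta> * dist x (z 1)"
    using near[OF SV ST xX z1 d Suc.prems(2)] by blast
  have ch: "chn X r (z 1) y n (\<lambda>i. z (Suc i))" using Suc.prems(1) unfolding chn_def by auto
  obtain b m w where bmw: "b \<in> F y" "chn X r a' b m w" "clen m w \<le> \<beta> * clen n (\<lambda>i. z (Suc i))"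
    using Suc.IH[OF ch a'(1)] by blast
  have aX: "a \<in> X" using Suc.prems(2) xX SV unfolding setvalued_compact_def by auto
  have "\<beta> * dist x (z 1) \<le> dist x (z 1)" using b0 by (simp add: mult_left_le_one_le)
  then have "dist a a' < r" using a'(2) d by linarith
  note P = chn_prepend[OF bmw(2) aX this]
  have "clen (Suc n) z = dist x (z 1) + clen n (\<lambda>i. z (Suc i))"
    using Suc.prems(1) unfolding clen_def chn_def sum.lessThan_Suc_shift by simp
  then have "dist a a' + clen m w \<le> \<beta> * clen (Suc n) z"
    using a'(2) bmw(3) by (simp add: distrib_left)
  then show ?case using P bmw(1) by metis
qed

lemma transfer_F:
  assumes "setvalued_compact X F" "stepc X F \<beta> r" "\<beta> \<ge> 0" "\<beta> \<le> 1"
  shows "transf X r F \<beta>"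
  unfolding transf_def using transfer_F_aux[OF assms] by blast

lemma transfer_comp:
  assumes G: "transf X r G \<beta>" and F: "transf X r F \<beta>" and "\<beta> \<ge> 0" "\<beta> \<le> 1"
  shows "transf X r (sv_comp F G) \<beta>"
  unfolding transf_def
proof (intro allI impI, elim conjE)
  fix x y n z a
  assume ch: "chn X r x y n z" and a: "a \<in> sv_comp F G x"
  then obtain u where u: "u \<in> G x" "a \<in> F u" unfolding sv_comp_def by auto
  obtain u' m w where 1: "u' \<in> G y" "chn X r u u' m w" "clen m w \<le> \<beta> * clen n z"
    using G ch u(1) unfolding transf_def by blast
  obtain b k v where 2: "b \<in> F u'" "chn X r a b k v" "clen k v \<le> \<beta> * clen m w"
    using F 1(2) u(2) unfolding transf_def by blast
  have "\<beta> * clen m w \<le> clen m w" using assms(3,4) clen_nonneg[of m w] by (simp add: mult_left_le_one_le)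
  then have "clen k v \<le> \<beta> * clen n z" using 1(3) 2(3) by linarith
  moreover have "b \<in> sv_comp F G y" using 1(1) 2(1) unfolding sv_comp_def by auto
  ultimately show "\<exists>b m w. b \<in> sv_comp F G y \<and> chn X r a b m w \<and> clen m w \<le> \<beta> * clen n z"
    using 2(2) by blast
qed

lemma transfer_iter:
  assumes "transf X r F \<beta>" "\<beta> \<ge> 0" "\<beta> \<le> 1"
  shows "transf X r (sv_iter k F) \<beta>"
  by (induction k) (auto intro: transfer_comp assms)


lemma union_compact:
  assumes SV: "setvalued_compact X F" and ST: "stepc X F \<beta> r" and r: "r > 0"
    and K: "compact K" "K \<subseteq> X" and X: "compact X"
  shows "compact (\<Union>u\<in>K. F u) \<and> (\<Union>u\<in>K. F u) \<subseteq> X"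
proof
  show "(\<Union>u\<in>K. F u) \<subseteq> X" using SV K(2) unfolding setvalued_compact_def by auto
  define T where "T = {p. fst p \<in> K \<and> snd p \<in> F (fst p)}"
  have cl: "closed T"
    unfolding closed_sequential_limits
  proof (intro allI impI, elim conjE)
    fix f l assume fT: "\<forall>n. f n \<in> T" and lim: "f \<longlonglongrightarrow> l"
    have l1: "(\<lambda>n. fst (f n)) \<longlonglongrightarrow> fst l" using lim by (rule tendsto_fst)
    have l2: "(\<lambda>n. snd (f n)) \<longlonglongrightarrow> snd l" using lim by (rule tendsto_snd)
    have fK: "\<forall>n. fst (f n) \<in> K" using fT unfolding T_def by auto
    have uK: "fst l \<in> K"
      using closed_sequential_limits[THEN iffD1, OF compact_imp_closed[OF K(1)], rule_format, of "\<lambda>n. fst (f n)" "fst l"] fK l1 by blast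
    then have uX: "fst l \<in> X" using K(2) by auto
    have Fu: "closed (F (fst l))" "F (fst l) \<noteq> {}" "compact (F (fst l))"
      using SV uX unfolding setvalued_compact_def by (auto intro: compact_imp_closed)
    have li: "(\<lambda>n. infdist (snd (f n)) (F (fst l))) \<longlonglongrightarrow> infdist (snd l) (F (fst l))"
      using l2 by (rule tendsto_infdist)
    have d0: "(\<lambda>n. \<beta> * dist (fst (f n)) (fst l)) \<longlonglongrightarrow> \<beta> * 0"
    proof -
      have "(\<lambda>n. dist (fst (f n)) (fst l)) \<longlonglongrightarrow> 0" using tendsto_dist_iff[THEN iffD1, OF l1] .
      then show ?thesis by (rule tendsto_mult_left)
    qed
    have ev: "eventually (\<lambda>n. dist (fst (f n)) (fst l) < r) sequentially"
      using tendsto_iff[THEN iffD1, OF l1] r by blast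
    have evb: "eventually (\<lambda>n. infdist (snd (f n)) (F (fst l)) \<le> \<beta> * dist (fst (f n)) (fst l)) sequentially"
      using ev
    proof eventually_elim
      case (elim n)
      have fn: "fst (f n) \<in> K" "snd (f n) \<in> F (fst (f n))" using fT unfolding T_def by auto
      then have "compact (F (fst (f n)))" using SV K(2) unfolding setvalued_compact_def by auto
      then have "infdist (snd (f n)) (F (fst l)) \<le> hausdorff_dist (F (fst (f n))) (F (fst l))"
        using fn(2) by (rule infdist_le_hd)
      also have "\<dots> \<le> \<beta> * dist (fst (f n)) (fst l)"
        using ST fn(1) K(2) uX elim unfolding stepc_def by auto
      finally show ?case .
    qed
    have "infdist (snd l) (F (fst l)) \<le> \<beta> * 0"
      by (rule tendsto_le[OF trivial_limit_sequentially d0 li evb])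
    then have "infdist (snd l) (F (fst l)) = 0" using infdist_nonneg[of "snd l" "F (fst l)"] by linarith
    then have "snd l \<in> F (fst l)" using in_closed_iff_infdist_zero[OF Fu(1,2)] by simp
    then show "l \<in> T" using uK unfolding T_def by auto
  qed
  have "T \<subseteq> K \<times> X"
  proof
    fix p assume "p \<in> T"
    then have p: "fst p \<in> K" "snd p \<in> F (fst p)" unfolding T_def by auto
    then have "fst p \<in> X" using K(2) by blast
    then have "F (fst p) \<subseteq> X" using SV unfolding setvalued_compact_def by blast
    then show "p \<in> K \<times> X" using p by (simp add: mem_Times_iff subset_iff)
  qed
  then have "T = (K \<times> X) \<inter> T" by auto
  then have "compact T" using compact_Int_closed[OF compact_Times[OF K(1) X] cl] by simp
  then have "compact (snd ` T)" by (rule compact_continuous_image[rotated]) (intro continuous_intros)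
  moreover have "snd ` T = (\<Union>u\<in>K. F u)"
  proof
    show "snd ` T \<subseteq> (\<Union>u\<in>K. F u)" unfolding T_def by auto
    show "(\<Union>u\<in>K. F u) \<subseteq> snd ` T"
    proof
      fix b assume "b \<in> (\<Union>u\<in>K. F u)"
      then obtain u where "u \<in> K" "b \<in> F u" by blast
      then have "(u, b) \<in> T" unfolding T_def by simp
      then show "b \<in> snd ` T" by (rule rev_image_eqI) simp
    qed
  qed
  ultimately show "compact (\<Union>u\<in>K. F u)" by simp
qed

lemma iter_compact:
  assumes SV: "setvalued_compact X F" and ST: "stepc X F \<beta> r" and r: "r > 0" and X: "compact X"
    and x: "x \<in> X"
  shows "compact (sv_iter k F x) \<and> sv_iter k F x \<subseteq> X"
proof (induction k)
  case 0 then show ?case using SV x unfolding setvalued_compact_def by simp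
next
  case (Suc k)
  have e: "sv_iter (Suc k) F x = (\<Union>u\<in>sv_iter k F x. F u)" by (simp add: sv_comp_def)
  show ?case unfolding e using union_compact[OF SV ST r _ _ X, of "sv_iter k F x"] Suc by blast
qed


lemma fixgen:
  fixes X :: "'a::metric_space set"
  assumes X: "compact X" and r: "r > 0" and b: "0 \<le> \<beta>" "\<beta> < 1"
    and T: "transf X r G \<beta>" and Gc: "\<And>x. x \<in> X \<Longrightarrow> closed (G x)"
    and a0: "a0 \<in> G x0" and c0: "chn X r x0 a0 n0 z0"
  shows "\<exists>x\<in>X. x \<in> G x"
proof -
  define S where "S = {L. \<exists>x a n z. a \<in> G x \<and> chn X r x a n z \<and> L = clen n z}"
  have Sne: "S \<noteq> {}" using a0 c0 unfolding S_def by blast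
  have Sge: "\<And>L. L \<in> S \<Longrightarrow> 0 \<le> L" unfolding S_def using clen_nonneg by blast
  have bdd: "bdd_below S" unfolding bdd_below_def using Sge by blast
  define c where "c = Inf S"
  have c0': "0 \<le> c" unfolding c_def using Sne Sge by (intro cInf_greatest) auto
  have key: "c \<le> \<beta> * c + e" if e: "e > 0" for e
  proof -
    have "Inf S < c + e" using e c_def by simp
    then obtain L where L: "L \<in> S" "L < c + e" using cInf_lessD[OF Sne] by blast
    then obtain x a n z where xa: "a \<in> G x" "chn X r x a n z" "L = clen n z" unfolding S_def by blast
    have "chn X r a a 0 (\<lambda>_. a)" using chn_zero chn_X[OF xa(2)] by blast
    obtain b m w where bm: "b \<in> G a" "chn X r a b m w" "clen m w \<le> \<beta> * clen n z"
      using T xa(1,2) unfolding transf_def by blast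
    have "clen m w \<in> S" using bm unfolding S_def by blast
    then have "c \<le> clen m w" unfolding c_def using bdd by (rule cInf_lower)
    also have "\<dots> \<le> \<beta> * L" using bm(3) xa(3) by simp
    also have "\<dots> \<le> \<beta> * (c + e)" using L(2) b by (simp add: mult_left_mono)
    also have "\<dots> \<le> \<beta> * c + e" using b e by (simp add: distrib_left mult_left_le_one_le)
    finally show ?thesis .
  qed
  have "c \<le> \<beta> * c" by (rule field_le_epsilon) (rule key)
  then have "(1 - \<beta>) * c \<le> 0" by (simp add: algebra_simps)
  then have cz: "c = 0" using c0' b by (simp add: mult_le_0_iff)
  have "\<forall>k. \<exists>p. fst p \<in> X \<and> snd p \<in> G (fst p) \<and> dist (fst p) (snd p) < 1 / real (Suc k)"
  proof
    fix k
    have "Inf S < 1 / real (Suc k)" using cz c_def by simp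
    then obtain L where L: "L \<in> S" "L < 1 / real (Suc k)" using cInf_lessD[OF Sne] by blast
    then obtain x a n z where xa: "a \<in> G x" "chn X r x a n z" "L = clen n z" unfolding S_def by blast
    have "dist x a \<le> clen n z" using clen_ge_dist[of z n] xa(2) unfolding chn_def by simp
    then show "\<exists>p. fst p \<in> X \<and> snd p \<in> G (fst p) \<and> dist (fst p) (snd p) < 1 / real (Suc k)"
      using xa L chn_X[OF xa(2)] by (intro exI[of _ "(x, a)"]) auto
  qed
  then obtain p where p: "\<And>k. fst (p k) \<in> X" "\<And>k. snd (p k) \<in> G (fst (p k))"
    "\<And>k. dist (fst (p k)) (snd (p k)) < 1 / real (Suc k)"
    by metis
  obtain xs \<sigma> where xs: "xs \<in> X" "strict_mono \<sigma>" "((\<lambda>k. fst (p k)) \<circ> \<sigma>) \<longlonglongrightarrow> xs"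
    using seq_compactE[OF compact_imp_seq_compact[OF X], of "\<lambda>k. fst (p k)"] p(1) by blast
  have Gne: "infdist xs (G xs) \<le> e \<and> G xs \<noteq> {}" if e: "e > 0" for e
  proof -
    have me: "min r (e / 4) > 0" using r e by simp
    obtain N where N: "\<forall>k\<ge>N. dist (((\<lambda>k. fst (p k)) \<circ> \<sigma>) k) xs < min r (e / 4)"
      using xs(3) me unfolding lim_sequentially by blast
    obtain M where M: "inverse (real (Suc M)) < e / 2" using reals_Archimedean[of "e/2"] e by auto
    define k where "k = max N M"
    have kM: "M \<le> \<sigma> k" using seq_suble[OF xs(2), of k] k_def by simp
    have "1 / real (Suc (\<sigma> k)) \<le> 1 / real (Suc M)" using kM by (simp add: frac_le)
    then have d1: "dist (fst (p (\<sigma> k))) (snd (p (\<sigma> k))) < e / 2" using p(3)[of "\<sigma> k"] M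
      by (simp add: inverse_eq_divide)
    have d0: "dist (fst (p (\<sigma> k))) xs < r" "dist (fst (p (\<sigma> k))) xs < e / 4" using N k_def by auto
    note S1 = chn_single[OF p(1) xs(1) d0(1)]
    obtain bb m w where bb: "bb \<in> G xs" "chn X r (snd (p (\<sigma> k))) bb m w"
      "clen m w \<le> \<beta> * dist (fst (p (\<sigma> k))) xs"
      using T S1 p(2) unfolding transf_def by metis
    have "dist (snd (p (\<sigma> k))) bb \<le> clen m w" using clen_ge_dist[of w m] bb(2) unfolding chn_def by simp
    also have "\<dots> \<le> dist (fst (p (\<sigma> k))) xs" 
    proof -
      have "\<beta> * dist (fst (p (\<sigma> k))) xs \<le> dist (fst (p (\<sigma> k))) xs"
        by (rule mult_left_le_one_le) (use b in auto)
      then show ?thesis using bb(3) by linarith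
    qed
    finally have d2: "dist (snd (p (\<sigma> k))) bb < e / 4" using d0(2) by linarith
    have "dist xs bb \<le> dist xs (fst (p (\<sigma> k))) + dist (fst (p (\<sigma> k))) (snd (p (\<sigma> k))) + dist (snd (p (\<sigma> k))) bb"
      using dist_triangle[of xs bb "fst (p (\<sigma> k))"] dist_triangle[of "fst (p (\<sigma> k))" bb "snd (p (\<sigma> k))"] by linarith
    then have "dist xs bb < e" using d0(2) d1 d2 by (simp add: dist_commute)
    then show ?thesis using infdist_le[OF bb(1), of xs] bb(1) by auto
  qed
  have ne: "G xs \<noteq> {}" using Gne[of 1] by simp
  have "infdist xs (G xs) \<le> 0"
  proof (rule field_le_epsilon)
    fix e :: real assume "e > 0" then show "infdist xs (G xs) \<le> 0 + e" using Gne by simp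
  qed
  then have "infdist xs (G xs) = 0" using infdist_nonneg[of xs "G xs"] by linarith
  then have "xs \<in> G xs" using in_closed_iff_infdist_zero[OF Gc[OF xs(1)] ne] by simp
  then show ?thesis using xs(1) by blast
qed


lemma local_unif:
  fixes X :: "'a::metric_space set"
  assumes X: "compact X" and LC: "local_contraction X F"
  shows "\<exists>\<beta> r. 0 \<le> \<beta> \<and> \<beta> < 1 \<and> r > 0 \<and> stepc X F \<beta> r"
proof -
  obtain R B where RB: "\<And>x. x \<in> X \<Longrightarrow> R x > 0 \<and> 0 \<le> B x \<and> B x < 1 \<and>
      (\<forall>y\<in>ballX X x (R x). \<forall>z\<in>ballX X x (R x). hausdorff_dist (F y) (F z) \<le> B x * dist y z)"
    using LC unfolding local_contraction_def by metis
  have "X \<subseteq> (\<Union>x\<in>X. ball x (R x))" using RB by force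
  then obtain D where D: "D \<subseteq> X" "finite D" "X \<subseteq> (\<Union>x\<in>D. ball x (R x))"
    using compactE_image[OF X, of X "\<lambda>x. ball x (R x)"] by blast
  obtain e where e: "e > 0" "\<And>y. y \<in> X \<Longrightarrow> \<exists>g\<in>(\<lambda>x. ball x (R x)) ` D. ball y e \<subseteq> g"
    using Heine_Borel_lemma[OF X D(3)] by blast
  define \<beta> where "\<beta> = Max (insert 0 (B ` D))"
  have fin: "finite (insert 0 (B ` D))" using D(2) by simp
  have b0: "0 \<le> \<beta>" unfolding \<beta>_def using fin by simp
  have b1: "\<beta> < 1"
  proof -
    have "\<beta> \<in> insert 0 (B ` D)" unfolding \<beta>_def using fin by (intro Max_in) auto
    then show ?thesis using RB D(1) by auto
  qed
  have st: "stepc X F \<beta> e" unfolding stepc_def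
  proof (intro ballI impI)
    fix y z assume yz: "y \<in> X" "z \<in> X" "dist y z < e"
    obtain x where x: "x \<in> D" "ball y e \<subseteq> ball x (R x)" using e(2)[OF yz(1)] by blast
    have "y \<in> ball y e" "z \<in> ball y e" using e(1) yz(3) by auto
    then have "dist x y \<le> R x" "dist x z \<le> R x" using x(2) by (auto simp: subset_iff less_imp_le)
    then have "y \<in> ballX X x (R x)" "z \<in> ballX X x (R x)" using yz unfolding ballX_def by auto
    then have "hausdorff_dist (F y) (F z) \<le> B x * dist y z" using RB x(1) D(1) by blast
    also have "\<dots> \<le> \<beta> * dist y z" unfolding \<beta>_def using fin x(1) by (intro mult_right_mono) auto
    finally show "hausdorff_dist (F y) (F z) \<le> \<beta> * dist y z" .
  qed
  show ?thesis using b0 b1 e(1) st by blast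
qed


theorem proposition11:
  fixes X :: "'a::metric_space set" and F :: "'a \<Rightarrow> 'a set"
  assumes "X \<noteq> {}" and "compact X"
    and "setvalued_compact X F"
    and "local_contraction X F"
  shows "(\<forall>r \<beta>. r_chainable X r \<and> uniform_local_contraction X F \<beta> r \<longrightarrow> Fix X F \<noteq> {})
    \<and> (finite (components X) \<and> (\<forall>x\<in>X. connected (F x))
         \<longrightarrow> (\<exists>m::nat. m > 0 \<and> Fix X (power_sv F m) \<noteq> {}))"
proof
  note Xne = assms(1) and X = assms(2) and SV = assms(3)
  obtain x0 where x0: "x0 \<in> X" using Xne by blast
  have Fc: "\<And>x. x \<in> X \<Longrightarrow> closed (F x)" using SV unfolding setvalued_compact_def
    by (auto intro: compact_imp_closed)
  show "\<forall>r \<beta>. r_chainable X r \<and> uniform_local_contraction X F \<beta> r \<longrightarrow> Fix X F \<noteq> {}"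
  proof (intro allI impI, elim conjE)
    fix r \<beta> assume ch: "r_chainable X r" and U: "uniform_local_contraction X F \<beta> r"
    have b: "r > 0" "0 \<le> \<beta>" "\<beta> < 1" using U unfolding uniform_local_contraction_def by auto
    have st: "stepc X F \<beta> r" unfolding stepc_def
    proof (intro ballI impI)
      fix y z assume yz: "y \<in> X" "z \<in> X" "dist y z < r"
      then have "y \<in> ballX X y r" "z \<in> ballX X y r" using b unfolding ballX_def by auto
      then show "hausdorff_dist (F y) (F z) \<le> \<beta> * dist y z"
        using U yz(1) unfolding uniform_local_contraction_def by blast
    qed
    have T: "transf X r F \<beta>" using transfer_F[OF SV st b(2)] b(3) by simp
    obtain a0 where a0: "a0 \<in> F x0" "a0 \<in> X" using SV x0 unfolding setvalued_compact_def by blast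
    obtain n z where "chn X r x0 a0 n z" using ch x0 a0(2) unfolding r_chainable_def chn_def by blast
    from fixgen[OF X b(1) b(2) b(3) T Fc a0(1) this] obtain x where "x \<in> X" "x \<in> F x" by blast
    then show "Fix X F \<noteq> {}" unfolding Fix_def by blast
  qed
  show "finite (components X) \<and> (\<forall>x\<in>X. connected (F x))
         \<longrightarrow> (\<exists>m::nat. m > 0 \<and> Fix X (power_sv F m) \<noteq> {})"
  proof
    obtain \<beta> r where b: "0 \<le> \<beta>" "\<beta> < 1" "r > 0" and st: "stepc X F \<beta> r"
      using local_unif[OF X assms(4)] by blast
    have TF: "transf X r F \<beta>" using transfer_F[OF SV st b(1)] b(2) by simp
    have "X \<subseteq> (\<Union>x\<in>X. ball x r)" using b(3) by force
    then obtain P where P: "P \<subseteq> X" "finite P" "X \<subseteq> (\<Union>x\<in>P. ball x r)"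
      using compactE_image[OF X, of X "\<lambda>x. ball x r"] by blast
    obtain p0 where p0: "p0 \<in> P" using P(3) x0 by blast
    define cen where "cen y = (SOME p. p \<in> P \<and> y \<in> ball p r)" for y
    define sel where "sel x = (SOME a. a \<in> F x)" for x
    have cen: "cen y \<in> P \<and> dist (cen y) y < r" if "y \<in> X" for y
    proof -
      have "\<exists>p. p \<in> P \<and> y \<in> ball p r" using P(3) that by blast
      then have "cen y \<in> P \<and> y \<in> ball (cen y) r" unfolding cen_def by (rule someI_ex)
      then show ?thesis by simp
    qed
    have sel: "sel x \<in> F x \<and> sel x \<in> X" if "x \<in> X" for x
    proof -
      have "\<exists>a. a \<in> F x" using SV that unfolding setvalued_compact_def by blast
      then have "sel x \<in> F x" unfolding sel_def by (rule someI_ex)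
      then show ?thesis using SV that unfolding setvalued_compact_def by blast
    qed
    define xq where "xq = rec_nat p0 (\<lambda>_ x. cen (sel x))"
    have xq0: "xq 0 = p0" and xqS: "\<And>i. xq (Suc i) = cen (sel (xq i))" unfolding xq_def by simp_all
    have xqP: "xq i \<in> P" for i
    proof (induction i)
      case 0 then show ?case using xq0 p0 by simp
    next
      case (Suc i)
      then have "xq i \<in> X" using P(1) by blast
      then show ?case using xqS cen sel by simp
    qed
    have xqX: "xq i \<in> X" for i using xqP P(1) by blast
    define aq where "aq i = sel (xq i)" for i
    have aqF: "aq i \<in> F (xq i)" "aq i \<in> X" for i unfolding aq_def using sel xqX by auto
    have aqd: "dist (xq (Suc i)) (aq i) < r" for i unfolding aq_def xqS using cen sel xqX by blast
    have "\<not> inj xq"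
    proof
      assume "inj xq"
      moreover have "finite (range xq)" using xqP P(2) by (meson finite_subset image_subsetI)
      ultimately have "finite (UNIV :: nat set)" using finite_imageD by blast
      then show False by simp
    qed
    then obtain s t where st': "s < t" "xq s = xq t" unfolding inj_def by (metis linorder_neqE_nat)
    have claim: "s + j < t \<longrightarrow> (\<exists>u \<in> sv_iter j F (xq s). \<exists>n w. chn X r (aq (s + j)) u n w)" for j
    proof (induction j)
      case 0
      show ?case using aqF[of s] chn_zero[of "aq s" X r] by auto
    next
      case (Suc j)
      show ?case
      proof
        assume lt: "s + Suc j < t"
        then obtain u n w where u: "u \<in> sv_iter j F (xq s)" "chn X r (aq (s + j)) u n w"
          using Suc by auto
        have P1: "chn X r (xq (Suc (s + j))) u (Suc n) (\<lambda>i. if i = 0 then xq (Suc (s + j)) else w (i - 1))"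
          using chn_prepend[OF u(2) xqX aqd] by blast
        obtain b m v where bm: "b \<in> F u" "chn X r (aq (Suc (s + j))) b m v"
          using TF P1 aqF(1)[of "Suc (s + j)"] unfolding transf_def by blast
        have "b \<in> sv_iter (Suc j) F (xq s)" using u(1) bm(1) by (auto simp: sv_comp_def)
        then show "\<exists>u \<in> sv_iter (Suc j) F (xq s). \<exists>n w. chn X r (aq (s + Suc j)) u n w"
          using bm(2) by auto
      qed
    qed
    define j where "j = t - s - 1"
    have sj: "s + j < t" "Suc (s + j) = t" using st'(1) unfolding j_def by auto
    obtain u n w where u: "u \<in> sv_iter j F (xq s)" "chn X r (aq (s + j)) u n w"
      using claim[of j] sj(1) by auto
    have dd: "dist (xq s) (aq (s + j)) < r" using aqd[of "s + j"] sj(2) st'(2) by simp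
    have P1: "chn X r (xq s) u (Suc n) (\<lambda>i. if i = 0 then xq s else w (i - 1))"
      using chn_prepend[OF u(2) xqX dd] by blast
    define m where "m = t - s"
    have pm: "power_sv F m = sv_iter j F" unfolding power_sv_def m_def j_def by simp
    have TG: "transf X r (power_sv F m) \<beta>" unfolding pm using transfer_iter[OF TF b(1)] b(2) by simp
    have GC: "closed (power_sv F m x)" if "x \<in> X" for x
      unfolding pm using iter_compact[OF SV st b(3) X that] by (auto intro: compact_imp_closed)
    obtain x where "x \<in> X" "x \<in> power_sv F m x"
      using fixgen[OF X b(3) b(1) b(2) TG GC _ P1] u(1) pm by auto
    then have "Fix X (power_sv F m) \<noteq> {}" unfolding Fix_def by blast
    moreover have "m > 0" using st'(1) m_def by simp
    ultimately show "\<exists>m::nat. m > 0 \<and> Fix X (power_sv F m) \<noteq> {}" by blast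
  qed
qed

end
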